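(* Fix $\theta$ with $\phi(\theta)<\beta$. Then $s_1(\theta,\tau^\star(\theta))<\beta$ if and only if $\tau_1^d(\theta)>\tau_2^d(\theta)$. Consequently $s_1(\theta,\tau^\star(\theta))>\beta$ if and only if $\tau_1^d(\theta)<\tau_2^d(\theta)$.
   Context: Setup. Let $Q\in\{0,1\}$ be a random variable with $\mathbb P(Q=1)=\pi\in(0,1)$, and let $(\Theta,\Gamma)$ be a real-valued random vector whose conditional joint density given $Q=1$ is $h_q$ and given $Q=0$ is $h_u$, both strictly positive on $\mathbb R^2$. Monotone likelihood ratio assumption: $l(\theta,\gamma)=h_q(\theta,\gamma)/h_u(\theta,\gamma)$ is continuous and strictly increasing in each of $\theta$ and $\gamma$, and for each $\theta$ the map $\gamma\mapsto l(\theta,\gamma)$ has infimum $0$ and supremum $+\infty$. Fix payoffs $x_q>0$, $x_u>0$. For $\tau\in(-x_u,x_q)$ let $A(\tau)=\mathbb 1\{l(\Theta,\Gamma)>\frac{(1-\pi)(x_u+\tau)}{\pi(x_q-\tau)}\}$, $s_1(\theta,\tau)=\mathbb E[Q\mid\Theta=\theta,A(\tau)=1]$, $s_2(\theta,\tau)=\mathbb E[A(\tau)\mid\Theta=\theta]$, $\phi(\theta)=\mathbb P(Q=1\mid\Theta=\theta)$. The equalizing prejudice $\tau^\star(\theta)$ is the unique $\tau\in(-x_u,x_q)$ with $s_1(\theta,\tau)=s_2(\theta,\tau)$. Fix a cutoff $c\in(-x_u,x_q)$ and let $\beta=(x_u+c)/(x_q+x_u)\in(0,1)$. The critical prejudice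 $\tau_k^d(\theta)$, $k=1,2$, is the unique $\tau\in(-x_u,x_q)$ with $s_k(\theta,\tau)=\beta$ (it exists for $k=1$ when $\phi(\theta)<\beta$, and always for $k=2$). *)

theory Defs
  imports "HOL-Analysis.Analysis"
begin

text \<open>Conditional densities: hq (given Q=1), hu (given Q=0) of (Theta, Gamma),
  written curried as h theta gamma. p is pi = P(Q=1).\<close>

definition lr :: "(real \<Rightarrow> real \<Rightarrow> real) \<Rightarrow> (real \<Rightarrow> real \<Rightarrow> real) \<Rightarrow> real \<Rightarrow> real \<Rightarrow> real" where
  "lr hq hu \<theta> \<gamma> = hq \<theta> \<gamma> / hu \<theta> \<gamma>"

definition thr :: "real \<Rightarrow> real \<Rightarrow> real \<Rightarrow> real \<Rightarrow> real" where
  "thr p xq xu \<tau> = (1 - p) * (xu + \<tau>) / (p * (xq - \<tau>))"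

definition accSet :: "(real \<Rightarrow> real \<Rightarrow> real) \<Rightarrow> (real \<Rightarrow> real \<Rightarrow> real) \<Rightarrow> real \<Rightarrow> real \<Rightarrow> real \<Rightarrow> real \<Rightarrow> real \<Rightarrow> real set" where
  "accSet hq hu p xq xu \<theta> \<tau> = {\<gamma>. lr hq hu \<theta> \<gamma> > thr p xq xu \<tau>}"

definition secm :: "(real \<Rightarrow> real \<Rightarrow> real) \<Rightarrow> real \<Rightarrow> real set \<Rightarrow> real" where
  "secm h \<theta> S = (\<integral>\<gamma>. indicator S \<gamma> * h \<theta> \<gamma> \<partial>lborel)"

text \<open>phi(theta) = P(Q=1 | Theta=theta).\<close>
definition phi :: "(real \<Rightarrow> real \<Rightarrow> real) \<Rightarrow> (real \<Rightarrow> real \<Rightarrow> real) \<Rightarrow> real \<Rightarrow> real \<Rightarrow> real" where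
  "phi hq hu p \<theta> = p * secm hq \<theta> UNIV / (p * secm hq \<theta> UNIV + (1 - p) * secm hu \<theta> UNIV)"

text \<open>s1(theta,tau) = E[Q | Theta=theta, A(tau)=1].\<close>
definition s1 :: "(real \<Rightarrow> real \<Rightarrow> real) \<Rightarrow> (real \<Rightarrow> real \<Rightarrow> real) \<Rightarrow> real \<Rightarrow> real \<Rightarrow> real \<Rightarrow> real \<Rightarrow> real \<Rightarrow> real" where
  "s1 hq hu p xq xu \<theta> \<tau> =
     (let A = accSet hq hu p xq xu \<theta> \<tau> in
      p * secm hq \<theta> A / (p * secm hq \<theta> A + (1 - p) * secm hu \<theta> A))"

text \<open>s2(theta,tau) = E[A(tau) | Theta=theta].\<close>
definition s2 :: "(real \<Rightarrow> real \<Rightarrow> real) \<Rightarrow> (real \<Rightarrow> real \<Rightarrow> real) \<Rightarrow> real \<Rightarrow> real \<Rightarrow> real \<Rightarrow> real \<Rightarrow> real \<Rightarrow> real" where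
  "s2 hq hu p xq xu \<theta> \<tau> =
     (let A = accSet hq hu p xq xu \<theta> \<tau> in
      (p * secm hq \<theta> A + (1 - p) * secm hu \<theta> A) /
      (p * secm hq \<theta> UNIV + (1 - p) * secm hu \<theta> UNIV))"

definition tau_star :: "(real \<Rightarrow> real \<Rightarrow> real) \<Rightarrow> (real \<Rightarrow> real \<Rightarrow> real) \<Rightarrow> real \<Rightarrow> real \<Rightarrow> real \<Rightarrow> real \<Rightarrow> real" where
  "tau_star hq hu p xq xu \<theta> =
     (THE \<tau>. \<tau> \<in> {-xu<..<xq} \<and> s1 hq hu p xq xu \<theta> \<tau> = s2 hq hu p xq xu \<theta> \<tau>)"

definition tau_d1 :: "(real \<Rightarrow> real \<Rightarrow> real) \<Rightarrow> (real \<Rightarrow> real \<Rightarrow> real) \<Rightarrow> real \<Rightarrow> real \<Rightarrow> real \<Rightarrow> real \<Rightarrow> real \<Rightarrow> real" where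
  "tau_d1 hq hu p xq xu \<beta> \<theta> =
     (THE \<tau>. \<tau> \<in> {-xu<..<xq} \<and> s1 hq hu p xq xu \<theta> \<tau> = \<beta>)"

definition tau_d2 :: "(real \<Rightarrow> real \<Rightarrow> real) \<Rightarrow> (real \<Rightarrow> real \<Rightarrow> real) \<Rightarrow> real \<Rightarrow> real \<Rightarrow> real \<Rightarrow> real \<Rightarrow> real \<Rightarrow> real" where
  "tau_d2 hq hu p xq xu \<beta> \<theta> =
     (THE \<tau>. \<tau> \<in> {-xu<..<xq} \<and> s2 hq hu p xq xu \<theta> \<tau> = \<beta>)"

end

theory Submission
  imports Defs "HOL-Probability.Probability"
begin


lemma dens_measure:
  fixes f :: "real \<Rightarrow> real"
  assumes fi: "integrable lborel f" and fp: "\<And>x. f x > 0" and S: "S \<in> sets borel"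
  shows "measure (density lborel (\<lambda>x. ennreal (f x))) S = (\<integral>x. indicator S x * f x \<partial>lborel)"
proof -
  have fm: "f \<in> borel_measurable lborel" using fi by auto
  have ii: "integrable lborel (\<lambda>x. indicator S x * f x)"
    using integrable_mult_indicator[of S lborel f] fi S by auto
  have "emeasure (density lborel (\<lambda>x. ennreal (f x))) S = (\<integral>\<^sup>+ x. ennreal (f x) * indicator S x \<partial>lborel)"
    using S fm by (subst emeasure_density) auto
  also have "\<dots> = (\<integral>\<^sup>+ x. ennreal (indicator S x * f x) \<partial>lborel)"
    by (intro nn_integral_cong) (auto simp: indicator_def)
  also have "\<dots> = ennreal (\<integral>x. indicator S x * f x \<partial>lborel)"
    using ii fp by (intro nn_integral_eq_integral) (auto simp: less_imp_le)
  finally have e: "emeasure (density lborel (\<lambda>x. ennreal (f x))) S = ennreal (\<integral>x. indicator S x * f x \<partial>lborel)" .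
  have I0: "0 \<le> (\<integral>x. indicator S x * f x \<partial>lborel)"
    using fp by (intro integral_nonneg_AE AE_I2) (simp add: less_imp_le)
  show ?thesis unfolding measure_def e using I0 by simp
qed

lemma dens_fbm:
  fixes f :: "real \<Rightarrow> real"
  assumes fi: "integrable lborel f" and fp: "\<And>x. f x > 0"
  shows "finite_borel_measure (density lborel (\<lambda>x. ennreal (f x)))"
proof -
  have fm: "f \<in> borel_measurable lborel" using fi by auto
  have "emeasure (density lborel (\<lambda>x. ennreal (f x))) UNIV = (\<integral>\<^sup>+ x. ennreal (f x) * indicator UNIV x \<partial>lborel)"
    using fm by (subst emeasure_density) auto
  also have "\<dots> = (\<integral>\<^sup>+ x. ennreal (f x) \<partial>lborel)" by simp
  also have "\<dots> = ennreal (\<integral>x. f x \<partial>lborel)"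
    using fi fp by (intro nn_integral_eq_integral) (auto simp: less_imp_le)
  finally have "emeasure (density lborel (\<lambda>x. ennreal (f x))) UNIV \<noteq> \<infinity>" by simp
  then have "finite_measure (density lborel (\<lambda>x. ennreal (f x)))"
    by (intro finite_measureI) simp
  then show ?thesis unfolding finite_borel_measure_def finite_borel_measure_axioms_def by simp
qed

lemma dens_tail:
  fixes f :: "real \<Rightarrow> real"
  assumes fi: "integrable lborel f" and fp: "\<And>x. f x > 0"
  shows "isCont (\<lambda>a. \<integral>x. indicator {a<..} x * f x \<partial>lborel) a0"
    and "((\<lambda>a. \<integral>x. indicator {a<..} x * f x \<partial>lborel) \<longlongrightarrow> (\<integral>x. f x \<partial>lborel)) at_bot"
    and "((\<lambda>a. \<integral>x. indicator {a<..} x * f x \<partial>lborel) \<longlongrightarrow> 0) at_top"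
proof -
  define M where "M = density lborel (\<lambda>x. ennreal (f x))"
  interpret finite_borel_measure M using dens_fbm[OF fi fp] M_def by simp
  have eq: "(\<integral>x. indicator {a<..} x * f x \<partial>lborel) = measure M UNIV - cdf M a" for a
  proof -
    have "(\<integral>x. indicator {a<..} x * f x \<partial>lborel) = measure M (space M - {..a})"
    proof -
      have "space M - {..a} = {a<..}" using borel_UNIV by auto
      then show ?thesis using dens_measure[OF fi fp, of "{a<..}"] by (simp add: M_def)
    qed
    also have "\<dots> = measure M (space M) - measure M {..a}"
      by (rule finite_measure_compl) auto
    finally show ?thesis using borel_UNIV by (simp add: cdf_def)
  qed
  have tot: "measure M UNIV = (\<integral>x. f x \<partial>lborel)"
    using dens_measure[OF fi fp, of UNIV] by (simp add: M_def)
  have sing: "measure M {x} = 0" for x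
  proof -
    have "AE y in lborel. indicator {x} y * f y = 0"
      using AE_lborel_singleton[of x] by eventually_elim auto
    then show ?thesis using dens_measure[OF fi fp, of "{x}"] M_def
      by (simp add: integral_eq_zero_AE)
  qed
  show "isCont (\<lambda>a. \<integral>x. indicator {a<..} x * f x \<partial>lborel) a0"
    unfolding eq using isCont_cdf sing by (intro continuous_intros) auto
  show "((\<lambda>a. \<integral>x. indicator {a<..} x * f x \<partial>lborel) \<longlongrightarrow> (\<integral>x. f x \<partial>lborel)) at_bot"
    unfolding eq using tendsto_diff[OF tendsto_const cdf_lim_at_bot, of "measure M UNIV"] tot
    by simp
  show "((\<lambda>a. \<integral>x. indicator {a<..} x * f x \<partial>lborel) \<longlongrightarrow> 0) at_top"
    unfolding eq using tendsto_diff[OF tendsto_const cdf_lim_at_top, of "measure M UNIV"] tot borel_UNIV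
    by simp
qed

lemma pos_int:
  fixes g :: "real \<Rightarrow> real"
  assumes gi: "integrable lborel g" and g0: "\<And>x. g x \<ge> 0" and S: "S \<in> sets borel"
    and Sm: "emeasure lborel S \<noteq> 0" and gp: "\<And>x. x \<in> S \<Longrightarrow> g x > 0"
  shows "(\<integral>x. g x \<partial>lborel) > 0"
proof (rule ccontr)
  assume "\<not> ?thesis"
  moreover have "(\<integral>x. g x \<partial>lborel) \<ge> 0" using g0 by (simp add: integral_nonneg_AE)
  ultimately have "(\<integral>x. g x \<partial>lborel) = 0" by simp
  then have "AE x in lborel. g x = 0"
    using integral_nonneg_eq_0_iff_AE[OF gi] g0 by simp
  then have "AE x in lborel. x \<notin> S" by eventually_elim (use gp in force)
  then have "emeasure lborel S = 0"
    using AE_iff_measurable[of S lborel "\<lambda>x. x \<notin> S"] S by auto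
  with Sm show False by simp
qed

lemma abstract_logic:
  fixes f g :: "real \<Rightarrow> real" and I :: "real set"
  assumes m1: "\<And>x y. x \<in> I \<Longrightarrow> y \<in> I \<Longrightarrow> x < y \<Longrightarrow> f x < f y"
    and m2: "\<And>x y. x \<in> I \<Longrightarrow> y \<in> I \<Longrightarrow> x < y \<Longrightarrow> g y < g x"
    and es: "\<exists>x\<in>I. f x = g x" and e1: "\<exists>x\<in>I. f x = b" and e2: "\<exists>x\<in>I. g x = b"
  shows "(f (THE x. x \<in> I \<and> f x = g x) < b \<longleftrightarrow> (THE x. x \<in> I \<and> f x = b) > (THE x. x \<in> I \<and> g x = b))
       \<and> (f (THE x. x \<in> I \<and> f x = g x) > b \<longleftrightarrow> (THE x. x \<in> I \<and> f x = b) < (THE x. x \<in> I \<and> g x = b))"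
proof -
  obtain ts where ts: "ts \<in> I" "f ts = g ts" using es by blast
  obtain t1 where t1: "t1 \<in> I" "f t1 = b" using e1 by blast
  obtain t2 where t2: "t2 \<in> I" "g t2 = b" using e2 by blast
  have THs: "(THE x. x \<in> I \<and> f x = g x) = ts"
  proof (rule the_equality)
    fix x assume "x \<in> I \<and> f x = g x"
    then show "x = ts" using ts m1[of x ts] m1[of ts x] m2[of x ts] m2[of ts x]
      by (cases x ts rule: linorder_cases) auto
  qed (use ts in auto)
  have TH1: "(THE x. x \<in> I \<and> f x = b) = t1"
  proof (rule the_equality)
    fix x assume "x \<in> I \<and> f x = b"
    then show "x = t1" using t1 m1[of x t1] m1[of t1 x]
      by (cases x t1 rule: linorder_cases) auto
  qed (use t1 in auto)
  have TH2: "(THE x. x \<in> I \<and> g x = b) = t2"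
  proof (rule the_equality)
    fix x assume "x \<in> I \<and> g x = b"
    then show "x = t2" using t2 m2[of x t2] m2[of t2 x]
      by (cases x t2 rule: linorder_cases) auto
  qed (use t2 in auto)
  have A: "f ts < b \<longleftrightarrow> ts < t1"
    using m1[of ts t1] m1[of t1 ts] ts t1 by (cases ts t1 rule: linorder_cases) auto
  have B: "g ts < b \<longleftrightarrow> t2 < ts"
    using m2[of ts t2] m2[of t2 ts] ts t2 by (cases ts t2 rule: linorder_cases) auto
  have A': "f ts > b \<longleftrightarrow> t1 < ts"
    using m1[of ts t1] m1[of t1 ts] ts t1 by (cases ts t1 rule: linorder_cases) auto
  have B': "g ts > b \<longleftrightarrow> ts < t2"
    using m2[of ts t2] m2[of t2 ts] ts t2 by (cases ts t2 rule: linorder_cases) auto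
  show ?thesis unfolding THs TH1 TH2 using A B A' B' ts(2) by auto
qed





locale LS =
  fixes hq hu :: "real \<Rightarrow> real \<Rightarrow> real" and p xq xu \<theta> :: real
  assumes p0: "0 < p" and p1: "p < 1"
    and hqp: "\<And>t g. hq t g > 0" and hup: "\<And>t g. hu t g > 0"
    and hqi: "\<And>t. integrable lborel (hq t)" and hui: "\<And>t. integrable lborel (hu t)"
    and lc: "continuous_on UNIV (\<lambda>(t, g). lr hq hu t g)"
    and lm: "\<And>t. strict_mono (\<lambda>g. lr hq hu t g)"
    and linf: "\<And>t. (INF g. lr hq hu t g) = 0"
    and lsup: "\<And>t. \<not> bdd_above (range (\<lambda>g. lr hq hu t g))"
    and xq: "xq > 0" and xu: "xu > 0"
begin

definition "L g = lr hq hu \<theta> g"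
definition "q a = (\<integral>x. indicator {a<..} x * hq \<theta> x \<partial>lborel)"
definition "u a = (\<integral>x. indicator {a<..} x * hu \<theta> x \<partial>lborel)"
definition "Qt = (\<integral>x. hq \<theta> x \<partial>lborel)"
definition "Ut = (\<integral>x. hu \<theta> x \<partial>lborel)"
definition "S1 a = p * q a / (p * q a + (1 - p) * u a)"
definition "S2 a = (p * q a + (1 - p) * u a) / (p * Qt + (1 - p) * Ut)"

lemma L_pos: "L g > 0"
  unfolding L_def lr_def using hqp hup by simp

lemma L_mono: "a < b \<Longrightarrow> L a < L b"
  unfolding L_def using lm[of \<theta>] by (simp add: strict_mono_def)

lemma L_less_iff: "L a < L b \<longleftrightarrow> a < b"
  using L_mono by (metis linorder_neqE_linordered_idom order_less_asym order_less_irrefl)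

lemma L_eq: "hq \<theta> x = L x * hu \<theta> x"
  unfolding L_def lr_def using hup[of \<theta> x] by simp

lemma L_cont: "continuous_on UNIV L"
proof -
  have "continuous_on UNIV ((\<lambda>(t, g). lr hq hu t g) \<circ> (\<lambda>g. (\<theta>, g)))"
    by (rule continuous_on_compose[OF _ continuous_on_subset[OF lc]]) (auto intro!: continuous_intros)
  then show ?thesis by (simp add: L_def[abs_def] o_def)
qed

lemma L_surj: assumes "y > 0" shows "\<exists>a. L a = y"
proof -
  have bb: "bdd_below (range L)" unfolding bdd_below_def using L_pos less_imp_le by blast
  have "(INF g. L g) = 0" using linf[of \<theta>] by (simp add: L_def)
  then have "(INF g. L g) < y" using assms by simp
  then obtain g1 where g1: "L g1 < y" using cINF_less_iff[of UNIV L y] bb by auto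
  have nb: "\<not> bdd_above (range L)" using lsup[of \<theta>] by (simp add: L_def[abs_def])
  have "\<exists>g. L g > y"
  proof (rule ccontr)
    assume "\<not> (\<exists>g. L g > y)"
    then have "\<And>g. L g \<le> y" by (simp add: not_less)
    then have "bdd_above (range L)" unfolding bdd_above_def by auto
    with nb show False by simp
  qed
  then obtain g2 where g2: "L g2 > y" by blast
  have "g1 < g2"
  proof (rule ccontr)
    assume "\<not> g1 < g2"
    then have "g2 \<le> g1" by simp
    then have "L g2 \<le> L g1" using L_mono[of g2 g1] by (cases "g2 = g1") auto
    with g1 g2 show False by simp
  qed
  then show ?thesis
    using IVT'[of L g1 y g2, OF _ _ _ continuous_on_subset[OF L_cont]] g1 g2 by auto
qed

lemma int_ind: "S \<in> sets borel \<Longrightarrow> integrable lborel (\<lambda>x. indicator S x * hq \<theta> x)"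
  "S \<in> sets borel \<Longrightarrow> integrable lborel (\<lambda>x. indicator S x * hu \<theta> x)"
  using integrable_mult_indicator[OF _ hqi[of \<theta>], of S] integrable_mult_indicator[OF _ hui[of \<theta>], of S] by simp_all

lemma meas_Ioc: "(a::real) < b \<Longrightarrow> emeasure lborel {a<..b} \<noteq> 0"
  by (subst emeasure_lborel_Ioc) auto

lemma meas_sup: assumes "{(a::real)<..a+1} \<subseteq> S" "S \<in> sets borel" shows "emeasure lborel S \<noteq> 0"
proof
  assume "emeasure lborel S = 0"
  then have "emeasure lborel {a<..a+1} = 0"
    using emeasure_mono[OF assms(1), of lborel] assms(2) by simp
  then show False using meas_Ioc[of a "a+1"] by simp
qed

lemma q_pos: "q a > 0" and u_pos: "u a > 0"
proof -
  have m: "emeasure lborel {a<..} \<noteq> 0" by (rule meas_sup[of a]) auto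
  show "q a > 0" unfolding q_def
    by (rule pos_int[where S="{a<..}"], rule int_ind, use m hqp in \<open>auto simp: indicator_def less_imp_le\<close>)
  show "u a > 0" unfolding u_def
    by (rule pos_int[where S="{a<..}"], rule int_ind, use m hup in \<open>auto simp: indicator_def less_imp_le\<close>)
qed

lemma Qt_pos: "Qt > 0" and Ut_pos: "Ut > 0"
proof -
  have m: "emeasure lborel (UNIV::real set) \<noteq> 0" by (rule meas_sup[of 0]) auto
  show "Qt > 0" unfolding Qt_def
    by (rule pos_int[where S="UNIV"], use m hqi hqp in \<open>auto simp: less_imp_le\<close>)
  show "Ut > 0" unfolding Ut_def
    by (rule pos_int[where S="UNIV"], use m hui hup in \<open>auto simp: less_imp_le\<close>)
qed

lemma diffs: assumes "a < b"
  shows "q a = q b + (\<integral>x. indicator {a<..b} x * hq \<theta> x \<partial>lborel)"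
    and "u a = u b + (\<integral>x. indicator {a<..b} x * hu \<theta> x \<partial>lborel)"
proof -
  have ind: "indicator {a<..} x = (indicator {b<..} x + indicator {a<..b} x :: real)" for x
    using assms by (auto simp: indicator_def)
  show "q a = q b + (\<integral>x. indicator {a<..b} x * hq \<theta> x \<partial>lborel)"
    unfolding q_def ind distrib_right by (rule Bochner_Integration.integral_add; rule int_ind; simp)
  show "u a = u b + (\<integral>x. indicator {a<..b} x * hu \<theta> x \<partial>lborel)"
    unfolding u_def ind distrib_right by (rule Bochner_Integration.integral_add; rule int_ind; simp)
qed


lemma dq_pos: "a < b \<Longrightarrow> (\<integral>x. indicator {a<..b} x * hq \<theta> x \<partial>lborel) > 0"
  by (rule pos_int[where S="{a<..b}"], rule int_ind, use hqp in \<open>auto simp: indicator_def less_imp_le\<close>)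

lemma du_pos: "a < b \<Longrightarrow> (\<integral>x. indicator {a<..b} x * hu \<theta> x \<partial>lborel) > 0"
  by (rule pos_int[where S="{a<..b}"], rule int_ind, use hup in \<open>auto simp: indicator_def less_imp_le\<close>)

lemma q_strict: "a < b \<Longrightarrow> q b < q a" using diffs(1) dq_pos by fastforce
lemma u_strict: "a < b \<Longrightarrow> u b < u a" using diffs(2) du_pos by fastforce

lemma ineq1: "(\<integral>x. indicator {a<..b} x * hq \<theta> x \<partial>lborel) \<le> L b * (\<integral>x. indicator {a<..b} x * hu \<theta> x \<partial>lborel)"
proof -
  have "(\<integral>x. indicator {a<..b} x * hq \<theta> x \<partial>lborel) \<le> (\<integral>x. L b * (indicator {a<..b} x * hu \<theta> x) \<partial>lborel)"
  proof (rule Bochner_Integration.integral_mono)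
    fix x
    show "indicator {a<..b} x * hq \<theta> x \<le> L b * (indicator {a<..b} x * hu \<theta> x)"
    proof (cases "x \<in> {a<..b}")
      case True
      then have "L x \<le> L b" using L_mono by (cases "x = b") (auto intro: less_imp_le)
      then show ?thesis using True L_eq[of x] hup[of \<theta> x] by (simp add: mult_right_mono)
    qed simp
  qed (auto intro: int_ind)
  then show ?thesis by simp
qed

lemma ineq2: "L b * u b < q b"
proof -
  have "0 < (\<integral>x. indicator {b<..} x * hq \<theta> x - L b * (indicator {b<..} x * hu \<theta> x) \<partial>lborel)"
  proof (rule pos_int[where S="{b<..}"])
    show "integrable lborel (\<lambda>x. indicator {b<..} x * hq \<theta> x - L b * (indicator {b<..} x * hu \<theta> x))"
      by (intro Bochner_Integration.integrable_diff Bochner_Integration.integrable_mult_right int_ind) auto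
  next
    fix x show "0 \<le> indicator {b<..} x * hq \<theta> x - L b * (indicator {b<..} x * hu \<theta> x)"
    proof (cases "b < x")
      case True
      then have "L b < L x" using L_mono by auto
      then show ?thesis using True L_eq[of x] hup[of \<theta> x] by (simp add: less_imp_le mult_right_mono)
    qed (simp add: indicator_def)
  next
    fix x assume "x \<in> {b<..}"
    then have "L b < L x" using L_mono by auto
    then show "0 < indicator {b<..} x * hq \<theta> x - L b * (indicator {b<..} x * hu \<theta> x)"
      using \<open>x \<in> {b<..}\<close> L_eq[of x] hup[of \<theta> x] by simp
  next
    show "emeasure lborel {b<..} \<noteq> 0" by (rule meas_sup[of b]) auto
  qed auto
  also have "\<dots> = q b - L b * u b"
    unfolding q_def u_def by (subst Bochner_Integration.integral_diff) (auto intro!: Bochner_Integration.integrable_mult_right int_ind)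
  finally show ?thesis by simp
qed

lemma ineq2': "L b * u b \<le> q b" using ineq2[of b] by simp

lemma ratio: assumes "a < b" shows "u b * q a < u a * q b"
proof -
  define dq where "dq = (\<integral>x. indicator {a<..b} x * hq \<theta> x \<partial>lborel)"
  define du where "du = (\<integral>x. indicator {a<..b} x * hu \<theta> x \<partial>lborel)"
  have qa: "q a = q b + dq" and ua: "u a = u b + du" using diffs[OF assms] dq_def du_def by auto
  have dqp: "dq > 0" using dq_pos[OF assms] dq_def by simp
  have i1: "dq \<le> L b * du" using ineq1 dq_def du_def by simp
  have i2: "L b * u b < q b" by (rule ineq2)
  have Lp: "L b > 0" by (rule L_pos)
  have ubp: "u b > 0" by (rule u_pos)
  have "dq * (L b * u b) < dq * q b" using dqp i2 by simp
  also have "\<dots> \<le> L b * du * q b" using i1 q_pos[of b] by (simp add: mult_right_mono)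
  finally have "L b * (u b * dq) < L b * (du * q b)" by (simp add: algebra_simps)
  then have "u b * dq < du * q b" using Lp by simp
  then show ?thesis unfolding qa ua by (simp add: algebra_simps)
qed

lemma S1_mono: "a < b \<Longrightarrow> S1 a < S1 b"
proof -
  assume ab: "a < b"
  have qa: "q a > 0" "q b > 0" "u a > 0" "u b > 0" using q_pos u_pos by auto
  have den: "p * q a + (1 - p) * u a > 0" "p * q b + (1 - p) * u b > 0"
    using qa p0 p1 by (auto intro: add_pos_pos)
  have r: "u b * q a < u a * q b" by (rule ratio[OF ab])
  have "p * q a * (p * q b + (1 - p) * u b) < p * q b * (p * q a + (1 - p) * u a)"
  proof -
    have "p * (1 - p) * (u b * q a) < p * (1 - p) * (u a * q b)" using r p0 p1 by simp
    then show ?thesis by (simp add: algebra_simps)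
  qed
  then show "S1 a < S1 b" unfolding S1_def using den by (simp add: divide_simps)
qed

lemma S2_mono: "a < b \<Longrightarrow> S2 b < S2 a"
proof -
  assume ab: "a < b"
  have den: "p * Qt + (1 - p) * Ut > 0" using Qt_pos Ut_pos p0 p1 by (auto intro: add_pos_pos)
  have "p * q b + (1 - p) * u b < p * q a + (1 - p) * u a"
    using q_strict[OF ab] u_strict[OF ab] p0 p1 by (intro add_less_le_mono) auto
  then show ?thesis unfolding S2_def using den by (simp add: divide_strict_right_mono)
qed

lemma den_pos: "p * Qt + (1 - p) * Ut > 0"
  using Qt_pos Ut_pos p0 p1 by (intro add_pos_pos mult_pos_pos) auto

lemma dena_pos: "p * q a + (1 - p) * u a > 0"
  using q_pos u_pos p0 p1 by (intro add_pos_pos mult_pos_pos) auto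

lemma S1_pos: "S1 a > 0"
  unfolding S1_def using q_pos u_pos p0 p1 by (auto intro!: divide_pos_pos add_pos_pos)

lemma cont_q: "isCont q a" and cont_u: "isCont u a"
  unfolding q_def[abs_def] u_def[abs_def] using dens_tail(1) hqi hui hqp hup by auto

lemma lim_q: "(q \<longlongrightarrow> Qt) at_bot" "(q \<longlongrightarrow> 0) at_top"
  and lim_u: "(u \<longlongrightarrow> Ut) at_bot" "(u \<longlongrightarrow> 0) at_top"
  unfolding q_def[abs_def] u_def[abs_def] Qt_def Ut_def using dens_tail(2,3) hqi hui hqp hup by auto

lemma cont_S: "isCont S1 a" "isCont S2 a"
proof -
  have "p * q a + (1 - p) * u a \<noteq> 0" using dena_pos[of a] by simp
  then show "isCont S1 a" unfolding S1_def[abs_def]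
    using cont_q cont_u by (intro continuous_intros) auto
  show "isCont S2 a" unfolding S2_def[abs_def]
    using cont_q cont_u den_pos by (intro continuous_intros) auto
qed

lemma lim_S1: "(S1 \<longlongrightarrow> p * Qt / (p * Qt + (1 - p) * Ut)) at_bot"
proof -
  have "p * Qt + (1 - p) * Ut \<noteq> 0" using den_pos by simp
  then show ?thesis unfolding S1_def[abs_def]
    using lim_q lim_u by (intro tendsto_intros) auto
qed

lemma lim_S2: "(S2 \<longlongrightarrow> 1) at_bot" "(S2 \<longlongrightarrow> 0) at_top"
proof -
  have nz: "p * Qt + (1 - p) * Ut \<noteq> 0" using den_pos by simp
  have "(S2 \<longlongrightarrow> (p * Qt + (1 - p) * Ut) / (p * Qt + (1 - p) * Ut)) at_bot"
    unfolding S2_def[abs_def] using lim_q(1) lim_u(1) nz by (intro tendsto_intros) auto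
  then show "(S2 \<longlongrightarrow> 1) at_bot" using nz by simp
  have "(S2 \<longlongrightarrow> (p * 0 + (1 - p) * 0) / (p * Qt + (1 - p) * Ut)) at_top"
    unfolding S2_def[abs_def] using lim_q(2) lim_u(2) nz by (intro tendsto_intros) auto
  then show "(S2 \<longlongrightarrow> 0) at_top" by simp
qed


lemma S1_le: "a \<le> b \<Longrightarrow> S1 a \<le> S1 b"
  using S1_mono[of a b] by (cases "a = b") auto

lemma S2_le: "a \<le> b \<Longrightarrow> S2 b \<le> S2 a"
  using S2_mono[of a b] by (cases "a = b") auto

lemma contS1: "continuous_on X S1" and contS2: "continuous_on X S2"
  using cont_S by (auto intro!: continuous_at_imp_continuous_on)

lemma phi_eq: "phi hq hu p \<theta> = p * Qt / (p * Qt + (1 - p) * Ut)"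
  unfolding phi_def secm_def Qt_def Ut_def by simp

lemma phi_lt1: "p * Qt / (p * Qt + (1 - p) * Ut) < 1"
  using den_pos Ut_pos p1 by (simp add: divide_simps)

lemma ex_S1: assumes "p * Qt / (p * Qt + (1 - p) * Ut) < \<beta>" "\<beta> < 1" shows "\<exists>a. S1 a = \<beta>"
proof -
  have "eventually (\<lambda>a. S1 a < \<beta>) at_bot" using order_tendstoD(2)[OF lim_S1 assms(1)] .
  then obtain a1 where a1: "S1 a1 < \<beta>" unfolding eventually_at_bot_linorder by auto
  have b0: "\<beta> > 0" using assms(1) den_pos Qt_pos p0 by (smt (verit) divide_pos_pos mult_pos_pos)
  define K where "K = (1 - p) * \<beta> / (p * (1 - \<beta>))"
  have K0: "K \<ge> 0" unfolding K_def using p0 p1 b0 assms(2) by simp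
  obtain a2 where a2L: "L a2 = K + 1" using L_surj[of "K + 1"] K0 by auto
  have i: "L a2 * u a2 \<le> q a2" by (rule ineq2')
  have up: "u a2 > 0" by (rule u_pos)
  have "K * u a2 < q a2" using i up a2L by (smt (verit) mult_strict_right_mono)
  then have "p * (1 - \<beta>) * (K * u a2) < p * (1 - \<beta>) * q a2"
    using p0 assms(2) by simp
  moreover have "p * (1 - \<beta>) * K = (1 - p) * \<beta>" unfolding K_def using p0 assms(2) by simp
  ultimately have "(1 - p) * \<beta> * u a2 < p * (1 - \<beta>) * q a2" by (simp add: mult.assoc[symmetric])
  then have "\<beta> * (p * q a2 + (1 - p) * u a2) < p * q a2" by (simp add: algebra_simps)
  then have a2: "\<beta> < S1 a2" unfolding S1_def using dena_pos[of a2] by (simp add: divide_simps)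
  have "a1 < a2"
  proof (rule ccontr)
    assume "\<not> a1 < a2" then have "S1 a2 \<le> S1 a1" using S1_le by simp
    with a1 a2 show False by simp
  qed
  then show ?thesis using IVT'[of S1 a1 \<beta> a2, OF _ _ _ contS1] a1 a2 by auto
qed

lemma ex_S2: assumes "0 < \<beta>" "\<beta> < 1" shows "\<exists>a. S2 a = \<beta>"
proof -
  have "eventually (\<lambda>a. S2 a > \<beta>) at_bot" using order_tendstoD(1)[OF lim_S2(1) assms(2)] .
  then obtain a1 where a1: "S2 a1 > \<beta>" unfolding eventually_at_bot_linorder by auto
  have "eventually (\<lambda>a. S2 a < \<beta>) at_top" using order_tendstoD(2)[OF lim_S2(2) assms(1)] .
  then obtain a2 where a2: "S2 a2 < \<beta>" unfolding eventually_at_top_linorder by auto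
  have "a1 < a2"
  proof (rule ccontr)
    assume "\<not> a1 < a2" then have "S2 a1 \<le> S2 a2" using S2_le by simp
    with a1 a2 show False by simp
  qed
  then show ?thesis using IVT2[of S2 a2 \<beta> a1] a1 a2 cont_S(2) by auto
qed

lemma ex_S12: "\<exists>a. S1 a = S2 a"
proof -
  define D where "D a = S2 a - S1 a" for a
  have Dm: "a \<le> b \<Longrightarrow> D b \<le> D a" for a b unfolding D_def using S1_le S2_le by (smt (verit))
  have cD: "continuous_on X D" for X unfolding D_def[abs_def] using contS1 contS2 by (intro continuous_intros)
  have "(D \<longlongrightarrow> 1 - p * Qt / (p * Qt + (1 - p) * Ut)) at_bot"
    unfolding D_def[abs_def] using lim_S1 lim_S2(1) by (intro tendsto_intros)
  moreover have "0 < 1 - p * Qt / (p * Qt + (1 - p) * Ut)" using phi_lt1 by simp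
  ultimately have "eventually (\<lambda>a. D a > 0) at_bot" by (rule order_tendstoD(1))
  then obtain a1 where a1: "D a1 > 0" unfolding eventually_at_bot_linorder by auto
  have "eventually (\<lambda>a. S2 a < S1 0) at_top" using order_tendstoD(2)[OF lim_S2(2) S1_pos[of 0]] .
  moreover have "eventually (\<lambda>a. a \<ge> (0::real)) at_top" by (rule eventually_ge_at_top)
  ultimately have "eventually (\<lambda>a. D a < 0) at_top"
  proof eventually_elim
    case (elim a) then show ?case unfolding D_def using S1_le[of 0 a] by simp
  qed
  then obtain a2 where a2: "D a2 < 0" unfolding eventually_at_top_linorder by auto
  have "a1 < a2"
  proof (rule ccontr)
    assume "\<not> a1 < a2" then have "D a1 \<le> D a2" using Dm by simp
    with a1 a2 show False by simp
  qed
  note a12 = this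
  have iD: "isCont D x" for x unfolding D_def[abs_def] using cont_S by (intro continuous_intros)
  obtain a where "D a = 0" using IVT2[of D a2 0 a1] a1 a2 a12 iD by force
  then show ?thesis unfolding D_def by (metis eq_iff_diff_eq_0)
qed

definition "I = {-xu<..<xq}"

lemma thr_pos: "\<tau> \<in> I \<Longrightarrow> thr p xq xu \<tau> > 0"
  unfolding thr_def I_def using p0 p1 by (auto intro!: divide_pos_pos mult_pos_pos)

lemma thr_mono: assumes "\<tau> \<in> I" "\<tau>' \<in> I" "\<tau> < \<tau>'" shows "thr p xq xu \<tau> < thr p xq xu \<tau>'"
proof -
  have h: "-xu < \<tau>" "\<tau> < xq" "-xu < \<tau>'" "\<tau>' < xq" using assms unfolding I_def by auto
  have "(xu + \<tau>) * (xq - \<tau>') < (xu + \<tau>') * (xq - \<tau>)"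
  proof -
    have "(xu + \<tau>') * (xq - \<tau>) - (xu + \<tau>) * (xq - \<tau>') = (\<tau>' - \<tau>) * (xq + xu)"
      by (simp add: algebra_simps)
    moreover have "(\<tau>' - \<tau>) * (xq + xu) > 0" using assms(3) xq xu by simp
    ultimately show ?thesis by simp
  qed
  then have "(xu + \<tau>) / (xq - \<tau>) < (xu + \<tau>') / (xq - \<tau>')"
    using h by (simp add: divide_simps)
  then have "(1 - p) / p * ((xu + \<tau>) / (xq - \<tau>)) < (1 - p) / p * ((xu + \<tau>') / (xq - \<tau>'))"
    using p0 p1 by (intro mult_strict_left_mono) auto
  then show ?thesis unfolding thr_def by (simp add: field_simps)
qed

lemma acc_eq: "L a = thr p xq xu \<tau> \<Longrightarrow> accSet hq hu p xq xu \<theta> \<tau> = {a<..}"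
  unfolding accSet_def using L_less_iff[of a] by (auto simp: L_def)

lemma s1_eq: "accSet hq hu p xq xu \<theta> \<tau> = {a<..} \<Longrightarrow> s1 hq hu p xq xu \<theta> \<tau> = S1 a"
  unfolding s1_def S1_def secm_def q_def u_def Let_def by simp

lemma s2_eq: "accSet hq hu p xq xu \<theta> \<tau> = {a<..} \<Longrightarrow> s2 hq hu p xq xu \<theta> \<tau> = S2 a"
  unfolding s2_def S2_def secm_def q_def u_def Qt_def Ut_def Let_def by simp

lemma tau_of: "\<exists>\<tau>\<in>I. thr p xq xu \<tau> = L a"
proof -
  define l where "l = L a"
  have l0: "l > 0" using L_pos l_def by simp
  define D where "D = (1 - p) + l * p"
  have D0: "D > 0" unfolding D_def using l0 p0 p1 by (simp add: add_pos_pos)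
  define t where "t = (l * p * xq - (1 - p) * xu) / D"
  define X where "X = xq + xu"
  have X0: "X > 0" unfolding X_def using xq xu by simp
  have e1: "xu + t = l * p * X / D" unfolding t_def X_def using D0 by (simp add: field_simps D_def)
  have e2: "xq - t = (1 - p) * X / D" unfolding t_def X_def using D0 by (simp add: field_simps D_def)
  have "xu + t > 0" unfolding e1 using l0 p0 D0 X0 by simp
  moreover have "xq - t > 0" unfolding e2 using p1 D0 X0 by simp
  ultimately have tI: "t \<in> I" unfolding I_def by auto
  have "thr p xq xu t = (1 - p) * (l * p * X / D) / (p * ((1 - p) * X / D))"
    unfolding thr_def e1 e2 ..
  also have "\<dots> = l" using D0 p0 p1 X0 by (simp add: field_simps)
  finally show ?thesis using tI l_def by auto
qed

lemma ex_tau: assumes "\<exists>a. P (S1 a) (S2 a)" shows "\<exists>\<tau>\<in>I. P (s1 hq hu p xq xu \<theta> \<tau>) (s2 hq hu p xq xu \<theta> \<tau>)"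
proof -
  obtain a where a: "P (S1 a) (S2 a)" using assms by blast
  obtain \<tau> where t: "\<tau> \<in> I" "thr p xq xu \<tau> = L a" using tau_of by blast
  have A: "accSet hq hu p xq xu \<theta> \<tau> = {a<..}" using acc_eq t(2) by simp
  have "P (s1 hq hu p xq xu \<theta> \<tau>) (s2 hq hu p xq xu \<theta> \<tau>)"
    using a by (simp only: s1_eq[OF A] s2_eq[OF A])
  then show ?thesis using t(1) by blast
qed

lemma mono_tau: assumes "\<tau> \<in> I" "\<tau>' \<in> I" "\<tau> < \<tau>'"
  shows "s1 hq hu p xq xu \<theta> \<tau> < s1 hq hu p xq xu \<theta> \<tau>'" "s2 hq hu p xq xu \<theta> \<tau>' < s2 hq hu p xq xu \<theta> \<tau>"
proof -
  obtain a where a: "L a = thr p xq xu \<tau>" using L_surj thr_pos assms(1) by blast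
  obtain a' where a': "L a' = thr p xq xu \<tau>'" using L_surj thr_pos assms(2) by blast
  have "L a < L a'" using thr_mono[OF assms] a a' by simp
  then have "a < a'" using L_less_iff by blast
  then show "s1 hq hu p xq xu \<theta> \<tau> < s1 hq hu p xq xu \<theta> \<tau>'" "s2 hq hu p xq xu \<theta> \<tau>' < s2 hq hu p xq xu \<theta> \<tau>"
    using s1_eq[OF acc_eq[OF a]] s1_eq[OF acc_eq[OF a']] s2_eq[OF acc_eq[OF a]] s2_eq[OF acc_eq[OF a']]
      S1_mono S2_mono by auto
qed

end

theorem mainTheorem10:
  fixes hq hu :: "real \<Rightarrow> real \<Rightarrow> real" and p xq xu c \<beta> \<theta> :: real
  assumes p: "0 < p" "p < 1"
    and hq_pos: "\<And>t g. hq t g > 0" and hu_pos: "\<And>t g. hu t g > 0"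
    and hq_dens: "integrable lborel (\<lambda>(t, g). hq t g)" "(\<integral>x. (case x of (t, g) \<Rightarrow> hq t g) \<partial>lborel) = 1"
    and hu_dens: "integrable lborel (\<lambda>(t, g). hu t g)" "(\<integral>x. (case x of (t, g) \<Rightarrow> hu t g) \<partial>lborel) = 1"
    and hq_sec: "\<And>t. integrable lborel (hq t)" and hu_sec: "\<And>t. integrable lborel (hu t)"
    and l_cont: "continuous_on UNIV (\<lambda>(t, g). lr hq hu t g)"
    and l_mono1: "\<And>g. strict_mono (\<lambda>t. lr hq hu t g)"
    and l_mono2: "\<And>t. strict_mono (\<lambda>g. lr hq hu t g)"
    and l_inf: "\<And>t. (INF g. lr hq hu t g) = 0"
    and l_sup: "\<And>t. \<not> bdd_above (range (\<lambda>g. lr hq hu t g))"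
    and xq: "xq > 0" and xu: "xu > 0"
    and c: "-xu < c" "c < xq"
    and beta: "\<beta> = (xu + c) / (xq + xu)"
    and phi_lt: "phi hq hu p \<theta> < \<beta>"
  shows "(s1 hq hu p xq xu \<theta> (tau_star hq hu p xq xu \<theta>) < \<beta> \<longleftrightarrow>
            tau_d1 hq hu p xq xu \<beta> \<theta> > tau_d2 hq hu p xq xu \<beta> \<theta>)
       \<and> (s1 hq hu p xq xu \<theta> (tau_star hq hu p xq xu \<theta>) > \<beta> \<longleftrightarrow>
            tau_d1 hq hu p xq xu \<beta> \<theta> < tau_d2 hq hu p xq xu \<beta> \<theta>)"
proof -
  interpret LS hq hu p xq xu \<theta>
    by (unfold_locales) (use assms in auto)
  have b0: "0 < \<beta>" unfolding beta using c xq xu by simp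
  have b1: "\<beta> < 1" unfolding beta using c xq xu by simp
  have e1: "\<exists>x\<in>I. s1 hq hu p xq xu \<theta> x = \<beta>"
    using ex_tau[of "\<lambda>x y. x = \<beta>"] ex_S1[of \<beta>] phi_lt b1 phi_eq by auto
  have e2: "\<exists>x\<in>I. s2 hq hu p xq xu \<theta> x = \<beta>"
    using ex_tau[of "\<lambda>x y. y = \<beta>"] ex_S2[OF b0 b1] by auto
  have es: "\<exists>x\<in>I. s1 hq hu p xq xu \<theta> x = s2 hq hu p xq xu \<theta> x"
    using ex_tau[of "\<lambda>x y. x = y"] ex_S12 by auto
  show ?thesis
    unfolding tau_star_def tau_d1_def tau_d2_def I_def[symmetric]
    by (rule abstract_logic[OF _ _ es e1 e2]) (auto intro: mono_tau)
qed

end
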